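(* Assume (F1) and (H1). Every solution $(c,\varphi)$ of the travelling wave problem satisfying $\varphi'(\xi)\geq0$ for all $\xi\in\mathbb{R}$ satisfies $\varphi'(\xi)>0$ for all $\xi\in\mathbb{R}$.
   Context: Fix constants $d>0$, $\tau\geq0$, $K>0$, $f:[0,K]^2\to\mathbb{R}$ and $h:\mathbb{R}\to\mathbb{R}$ (partial derivatives of $f$ assumed to exist). (F1) $f\in C([0,K]^2,\mathbb{R})$, $f(0,0)=f(K,K)=0$, $f(u,u)>0$ for $u\in(0,K)$, $\partial_2f(u,v)\geq0$ on $[0,K]^2$. (H1) $h\ge0$, even, integrable, $\int_{\mathbb{R}}h=1$. Notation: $\Delta_1\varphi(\xi)=\varphi(\xi+1)-2\varphi(\xi)+\varphi(\xi-1)$, $(h*\varphi)(\xi)=\int_{\mathbb{R}}h(y)\varphi(\xi-y)dy$. A solution $(c,\varphi)$ of the travelling wave problem consists of $c>0$ and a differentiable $\varphi:\mathbb{R}\to\mathbb{R}$ with $-c\varphi'(\xi)+d\Delta_1\varphi(\xi)+f(\varphi(\xi),(h*\varphi)(\xi-c\tau))=0$ for all $\xi$, $\lim_{\xi\to-\infty}\varphi(\xi)=0$, $\lim_{\xi\to\infty}\varphi(\xi)=K$, and $0\le\varphi\le K$ on $\mathbb{R}$. *)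

theory Defs
  imports "HOL-Analysis.Analysis"
begin

definition Delta1 :: "(real \<Rightarrow> real) \<Rightarrow> real \<Rightarrow> real" where
  "Delta1 \<phi> \<xi> = \<phi> (\<xi> + 1) - 2 * \<phi> \<xi> + \<phi> (\<xi> - 1)"

definition conv :: "(real \<Rightarrow> real) \<Rightarrow> (real \<Rightarrow> real) \<Rightarrow> real \<Rightarrow> real" where
  "conv h \<phi> \<xi> = (LINT y|lborel. h y * \<phi> (\<xi> - y))"

definition tw_solution ::
  "real \<Rightarrow> real \<Rightarrow> real \<Rightarrow> (real \<Rightarrow> real \<Rightarrow> real) \<Rightarrow> (real \<Rightarrow> real)
    \<Rightarrow> real \<Rightarrow> (real \<Rightarrow> real) \<Rightarrow> bool" where
  "tw_solution d \<tau> K f h c \<phi> \<longleftrightarrow>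
     c > 0 \<and>
     (\<forall>\<xi>. \<phi> differentiable (at \<xi>)) \<and>
     (\<forall>\<xi>. - c * deriv \<phi> \<xi> + d * Delta1 \<phi> \<xi> + f (\<phi> \<xi>) (conv h \<phi> (\<xi> - c * \<tau>)) = 0) \<and>
     (\<phi> \<longlongrightarrow> 0) at_bot \<and>
     (\<phi> \<longlongrightarrow> K) at_top \<and>
     (\<forall>\<xi>. 0 \<le> \<phi> \<xi> \<and> \<phi> \<xi> \<le> K)"

end

theory Submission
  imports Defs
begin

lemma f_mono_v:
  fixes f f2 :: "real \<Rightarrow> real \<Rightarrow> real" and K u a b :: real
  assumes f2_deriv: "\<And>u v. u \<in> {0..K} \<Longrightarrow> v \<in> {0..K} \<Longrightarrow>
        ((\<lambda>y. f u y) has_real_derivative f2 u v) (at v within {0..K})"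
    and F1_mono: "\<And>u v. u \<in> {0..K} \<Longrightarrow> v \<in> {0..K} \<Longrightarrow> f2 u v \<ge> 0"
    and u: "u \<in> {0..K}" and ab: "0 \<le> a" "a \<le> b" "b \<le> K"
  shows "f u a \<le> f u b"
proof (cases "a = b")
  case True then show ?thesis by simp
next
  case False
  then have lt: "a < b" using ab by simp
  have cont: "continuous_on {a..b} (\<lambda>y. f u y)"
  proof -
    have "continuous_on {0..K} (\<lambda>y. f u y)"
      unfolding continuous_on_eq_continuous_within
      using f2_deriv[OF u] DERIV_continuous by blast
    then show ?thesis by (rule continuous_on_subset) (use ab in auto)
  qed
  have "(\<lambda>y. f u y) differentiable (at x)" if x: "a < x" "x < b" for x
  proof -
    have "at x within {0..K} = at x" using ab x by (intro at_within_Icc_at) auto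
    then show "(\<lambda>y. f u y) differentiable (at x)"
      using f2_deriv[OF u, of x] x ab real_differentiable_def by fastforce
  qed
  then obtain l z where z: "a < z" "z < b"
    and D: "((\<lambda>y. f u y) has_real_derivative l) (at z)" and eq: "f u b - f u a = (b - a) * l"
    using MVT[OF lt cont] by blast
  have "at z within {0..K} = at z" using ab z by (intro at_within_Icc_at) auto
  then have "((\<lambda>y. f u y) has_real_derivative f2 u z) (at z)" using f2_deriv[OF u, of z] z ab by auto
  then have "l = f2 u z" using D DERIV_unique by blast
  then have "l \<ge> 0" using F1_mono[OF u, of z] z ab by auto
  then show ?thesis using eq lt by (simp add: algebra_simps) (metis diff_ge_0_iff_ge eq mult_nonneg_nonneg less_imp_le)
qed

lemma conv_props:
  fixes h \<phi> :: "real \<Rightarrow> real" and K :: real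
  assumes H1_nonneg: "\<And>x. h x \<ge> 0"
    and H1_int: "integrable lborel h"
    and H1_one: "(LINT x|lborel. h x) = 1"
    and cont: "continuous_on UNIV \<phi>"
    and bnd: "\<And>x. 0 \<le> \<phi> x \<and> \<phi> x \<le> K"
    and mono: "\<And>x y. x \<le> y \<Longrightarrow> \<phi> x \<le> \<phi> y"
  shows "\<And>x. 0 \<le> conv h \<phi> x \<and> conv h \<phi> x \<le> K"
    and "\<And>x y. x \<le> y \<Longrightarrow> conv h \<phi> x \<le> conv h \<phi> y"
proof -
  have int: "integrable lborel (\<lambda>y. h y * \<phi> (x - y))" for x
  proof -
    have i: "integrable lborel (\<lambda>y. K * h y)" using H1_int by simp
    have "(\<lambda>y. \<phi> (x - y)) \<in> borel_measurable borel"
      by (intro borel_measurable_continuous_onI continuous_on_compose2[OF cont]) (auto intro!: continuous_intros)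
    then have m: "(\<lambda>y. h y * \<phi> (x - y)) \<in> borel_measurable lborel"
      using borel_measurable_integrable[OF H1_int] by simp
    have ae: "AE y in lborel. norm (h y * \<phi> (x - y)) \<le> norm (K * h y)"
    proof (intro AE_I2)
      fix y
      have "h y * \<phi> (x - y) \<le> h y * K"
        using bnd[of "x-y"] H1_nonneg[of y] by (intro mult_left_mono) auto
      then show "norm (h y * \<phi> (x - y)) \<le> norm (K * h y)"
        using bnd[of "x-y"] H1_nonneg[of y] by (simp add: abs_mult mult.commute)
    qed
    show ?thesis using Bochner_Integration.integrable_bound[OF i m ae] .
  qed
  show "0 \<le> conv h \<phi> x \<and> conv h \<phi> x \<le> K" for x
  proof
    show "0 \<le> conv h \<phi> x" unfolding conv_def
      using bnd H1_nonneg by (intro integral_nonneg_AE) auto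
    have "conv h \<phi> x \<le> (LINT y|lborel. K * h y)" unfolding conv_def
      using bnd H1_nonneg int H1_int
      by (intro integral_mono) (auto simp: mult.commute[of K] intro!: mult_left_mono)
    also have "\<dots> = K" using H1_one by simp
    finally show "conv h \<phi> x \<le> K" .
  qed
  show "conv h \<phi> x \<le> conv h \<phi> y" if "x \<le> y" for x y
    unfolding conv_def using int H1_nonneg mono that
    by (intro integral_mono) (auto intro!: mult_left_mono)
qed


theorem lemma3p2:
  fixes d \<tau> K c :: real
    and f :: "real \<Rightarrow> real \<Rightarrow> real"
    and f1 f2 :: "real \<Rightarrow> real \<Rightarrow> real"
    and h \<phi> :: "real \<Rightarrow> real"
  assumes d: "d > 0" and tau: "\<tau> \<ge> 0" and K: "K > 0"
    and f1_deriv: "\<And>u v. u \<in> {0..K} \<Longrightarrow> v \<in> {0..K} \<Longrightarrow>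
        ((\<lambda>x. f x v) has_real_derivative f1 u v) (at u within {0..K})"
    and f2_deriv: "\<And>u v. u \<in> {0..K} \<Longrightarrow> v \<in> {0..K} \<Longrightarrow>
        ((\<lambda>y. f u y) has_real_derivative f2 u v) (at v within {0..K})"
    and F1_cont: "continuous_on ({0..K} \<times> {0..K}) (\<lambda>(u, v). f u v)"
    and F1_zero: "f 0 0 = 0" "f K K = 0"
    and F1_pos: "\<And>u. 0 < u \<Longrightarrow> u < K \<Longrightarrow> f u u > 0"
    and F1_mono: "\<And>u v. u \<in> {0..K} \<Longrightarrow> v \<in> {0..K} \<Longrightarrow> f2 u v \<ge> 0"
    and H1_nonneg: "\<And>x. h x \<ge> 0"
    and H1_even: "\<And>x. h (- x) = h x"
    and H1_int: "integrable lborel h"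
    and H1_one: "(LINT x|lborel. h x) = 1"
    and sol: "tw_solution d \<tau> K f h c \<phi>"
    and mono: "\<And>\<xi>. deriv \<phi> \<xi> \<ge> 0"
  shows "\<forall>\<xi>. deriv \<phi> \<xi> > 0"
proof -
  from sol have c: "c > 0" and dif: "\<And>x. \<phi> differentiable (at x)"
    and eqn: "\<And>x. - c * deriv \<phi> x + d * Delta1 \<phi> x + f (\<phi> x) (conv h \<phi> (x - c * \<tau>)) = 0"
    and lim0: "(\<phi> \<longlongrightarrow> 0) at_bot" and limK: "(\<phi> \<longlongrightarrow> K) at_top"
    and bnd: "\<And>x. 0 \<le> \<phi> x \<and> \<phi> x \<le> K"
    unfolding tw_solution_def by auto
  have D: "\<And>x. (\<phi> has_real_derivative deriv \<phi> x) (at x)"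
    using dif DERIV_deriv_iff_real_differentiable by blast
  have cont: "continuous_on UNIV \<phi>"
    using D DERIV_continuous continuous_at_imp_continuous_on by blast
  have pmono: "\<phi> x \<le> \<phi> y" if "x \<le> y" for x y
    using DERIV_nonneg_imp_nondecreasing[OF that] D mono by blast
  define w where "w x = conv h \<phi> (x - c * \<tau>)" for x
  have wb: "0 \<le> w x \<and> w x \<le> K" for x
    unfolding w_def by (rule conv_props(1)[OF H1_nonneg H1_int H1_one cont bnd pmono])
  have wmono: "w x \<le> w y" if "x \<le> y" for x y
    unfolding w_def using that by (intro conv_props(2)[OF H1_nonneg H1_int H1_one cont bnd pmono]) auto
  have E: "c * deriv \<phi> x = d * (\<phi> (x + 1) - 2 * \<phi> x + \<phi> (x - 1)) + f (\<phi> x) (w x)" for x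
    using eqn[of x] unfolding w_def Delta1_def by linarith
  have fmono: "f u a \<le> f u b" if "u \<in> {0..K}" "0 \<le> a" "a \<le> b" "b \<le> K" for u a b
    by (rule f_mono_v[OF f2_deriv F1_mono that])
  have local: "\<exists>e>0. \<forall>\<eta>. \<xi>0 - e \<le> \<eta> \<and> \<eta> \<le> \<xi>0 \<longrightarrow> \<phi> \<eta> = \<phi> \<xi>0"
    if z: "deriv \<phi> \<xi>0 = 0" for \<xi>0
  proof -
    define u0 where "u0 = \<phi> \<xi>0"
    define w0 where "w0 = w \<xi>0"
    define a where "a = f1 u0 w0"
    have u0K: "u0 \<in> {0..K}" "w0 \<in> {0..K}" using bnd wb unfolding u0_def w0_def by auto
    have fd: "((\<lambda>x. f x w0) has_real_derivative a) (at u0 within {0..K})"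
      unfolding a_def using f1_deriv u0K by blast
    obtain r where r: "r > 0" and rb: "\<And>x. x \<in> {0..K} \<Longrightarrow> \<bar>x - u0\<bar> < r \<Longrightarrow>
        \<bar>f x w0 - f u0 w0\<bar> \<le> (\<bar>a\<bar> + 1) * \<bar>x - u0\<bar>"
    proof -
      have "((\<lambda>x. (f x w0 - f u0 w0) / (x - u0)) \<longlongrightarrow> a) (at u0 within {0..K})"
        using fd[unfolded has_field_derivative_iff] by simp
      then have "eventually (\<lambda>x. dist ((f x w0 - f u0 w0) / (x - u0)) a < 1) (at u0 within {0..K})"
        by (rule tendstoD) simp
      then have "\<exists>r>0. \<forall>x\<in>{0..K}. x \<noteq> u0 \<and> dist x u0 < r \<longrightarrow> dist ((f x w0 - f u0 w0) / (x - u0)) a < 1"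
        by (simp only: eventually_at)
      then obtain r where r: "r > 0" and rr: "\<forall>x\<in>{0..K}. x \<noteq> u0 \<and> dist x u0 < r \<longrightarrow> dist ((f x w0 - f u0 w0) / (x - u0)) a < 1"
        by blast
      have "\<bar>f x w0 - f u0 w0\<bar> \<le> (\<bar>a\<bar> + 1) * \<bar>x - u0\<bar>" if "x \<in> {0..K}" "\<bar>x - u0\<bar> < r" for x
      proof (cases "x = u0")
        case True then show ?thesis by simp
      next
        case False
        define q where "q = (f x w0 - f u0 w0) / (x - u0)"
        have "\<bar>q - a\<bar> < 1" using rr that False unfolding q_def dist_real_def by auto
        then have "\<bar>q\<bar> \<le> \<bar>a\<bar> + 1" by linarith
        moreover have "f x w0 - f u0 w0 = q * (x - u0)" using False unfolding q_def by simp
        ultimately show ?thesis by (simp add: abs_mult mult_right_mono)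
      qed
      then show ?thesis using that r by blast
    qed
    obtain e where e: "e > 0" and eb: "\<And>y. \<bar>y - \<xi>0\<bar> < e \<Longrightarrow> \<bar>\<phi> y - u0\<bar> < r"
    proof -
      have "isCont \<phi> \<xi>0" using D DERIV_isCont by blast
      then have "\<forall>r>0. \<exists>s>0. \<forall>y. y \<noteq> \<xi>0 \<and> norm (y - \<xi>0) < s \<longrightarrow> norm (\<phi> y - \<phi> \<xi>0) < r"
        by (simp only: isCont_def LIM_eq)
      then obtain e where e: "e > 0" and ee: "\<forall>y. y \<noteq> \<xi>0 \<and> norm (y - \<xi>0) < e \<longrightarrow> norm (\<phi> y - \<phi> \<xi>0) < r"
        using r by blast
      have "\<bar>\<phi> y - u0\<bar> < r" if "\<bar>y - \<xi>0\<bar> < e" for y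
        using ee that r unfolding u0_def by (cases "y = \<xi>0") auto
      then show ?thesis using that e by blast
    qed
    define M where "M = 2 * d + \<bar>a\<bar> + 1"
    have key: "c * deriv \<phi> \<eta> \<le> M * (u0 - \<phi> \<eta>)" if eta: "\<xi>0 - e < \<eta>" "\<eta> \<le> \<xi>0" for \<eta>
    proof -
      have e0: "0 = d * (\<phi> (\<xi>0 + 1) - 2 * u0 + \<phi> (\<xi>0 - 1)) + f u0 w0"
        using E[of \<xi>0] z unfolding u0_def w0_def by simp
      have e1: "c * deriv \<phi> \<eta> = d * (\<phi> (\<eta> + 1) - 2 * \<phi> \<eta> + \<phi> (\<eta> - 1)) + f (\<phi> \<eta>) (w \<eta>)"
        by (rule E)
      have m1: "\<phi> (\<eta> + 1) \<le> \<phi> (\<xi>0 + 1)" "\<phi> (\<eta> - 1) \<le> \<phi> (\<xi>0 - 1)" "\<phi> \<eta> \<le> u0"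
        using pmono eta unfolding u0_def by auto
      have "d * ((\<phi> (\<eta> + 1) - \<phi> (\<xi>0 + 1)) + (\<phi> (\<eta> - 1) - \<phi> (\<xi>0 - 1))) \<le> d * 0"
        using m1 d by (intro mult_left_mono) auto
      then have dd: "d * (\<phi> (\<eta> + 1) - 2 * \<phi> \<eta> + \<phi> (\<eta> - 1)) - d * (\<phi> (\<xi>0 + 1) - 2 * u0 + \<phi> (\<xi>0 - 1))
          \<le> 2 * d * (u0 - \<phi> \<eta>)"
        by (simp add: algebra_simps)
      have fb1: "f (\<phi> \<eta>) (w \<eta>) \<le> f (\<phi> \<eta>) w0"
        using fmono[of "\<phi> \<eta>" "w \<eta>" w0] bnd[of \<eta>] wb[of \<eta>] wb[of \<xi>0] wmono[of \<eta> \<xi>0] eta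
        unfolding w0_def by auto
      have "\<bar>\<phi> \<eta> - u0\<bar> < r" using eb eta by auto
      then have "\<bar>f (\<phi> \<eta>) w0 - f u0 w0\<bar> \<le> (\<bar>a\<bar> + 1) * \<bar>\<phi> \<eta> - u0\<bar>"
        using rb bnd[of \<eta>] by auto
      moreover have "\<bar>\<phi> \<eta> - u0\<bar> = u0 - \<phi> \<eta>" using m1 by simp
      ultimately have fb2: "f (\<phi> \<eta>) w0 - f u0 w0 \<le> (\<bar>a\<bar> + 1) * (u0 - \<phi> \<eta>)" by simp
      show ?thesis using e0 e1 dd fb1 fb2 unfolding M_def by (simp add: algebra_simps)
    qed
    have const: "\<phi> \<eta> = u0" if eta: "\<xi>0 - e / 2 \<le> \<eta>" "\<eta> \<le> \<xi>0" for \<eta>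
    proof -
      define G where "G t = exp (M / c * t) * (u0 - \<phi> t)" for t
      have "G \<eta> \<le> G \<xi>0"
      proof (rule DERIV_nonneg_imp_nondecreasing[OF eta(2)])
        fix t assume t: "\<eta> \<le> t" "t \<le> \<xi>0"
        have der: "(G has_real_derivative (exp (M / c * t) * (M / c) * (u0 - \<phi> t) - exp (M / c * t) * deriv \<phi> t)) (at t)"
          unfolding G_def using c by (auto intro!: derivative_eq_intros D simp: field_simps)
        have "c * deriv \<phi> t \<le> M * (u0 - \<phi> t)" using key t eta e by auto
        then have "deriv \<phi> t \<le> M / c * (u0 - \<phi> t)" using c by (simp add: field_simps)
        then have nn: "0 \<le> exp (M / c * t) * (M / c * (u0 - \<phi> t) - deriv \<phi> t)" by simp
        have eqY: "exp (M / c * t) * (M / c) * (u0 - \<phi> t) - exp (M / c * t) * deriv \<phi> t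
            = exp (M / c * t) * (M / c * (u0 - \<phi> t) - deriv \<phi> t)" by (simp only: right_diff_distrib mult.assoc)
        show "\<exists>y. (G has_real_derivative y) (at t) \<and> 0 \<le> y"
        proof (intro exI[of _ "exp (M / c * t) * (M / c) * (u0 - \<phi> t) - exp (M / c * t) * deriv \<phi> t"] conjI)
          show "(G has_real_derivative (exp (M / c * t) * (M / c) * (u0 - \<phi> t) - exp (M / c * t) * deriv \<phi> t)) (at t)"
            by (rule der)
          show "0 \<le> exp (M / c * t) * (M / c) * (u0 - \<phi> t) - exp (M / c * t) * deriv \<phi> t"
            using nn eqY by linarith
        qed
      qed
      also have "G \<xi>0 = 0" unfolding G_def u0_def by simp
      finally have "u0 - \<phi> \<eta> \<le> 0" unfolding G_def by (simp add: mult_le_0_iff)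
      moreover have "\<phi> \<eta> \<le> u0" using pmono eta unfolding u0_def by auto
      ultimately show ?thesis by simp
    qed
    show ?thesis
    proof (rule exI[of _ "e/2"], intro conjI allI impI)
      show "e/2 > 0" using e by simp
      fix \<eta> assume "\<xi>0 - e/2 \<le> \<eta> \<and> \<eta> \<le> \<xi>0"
      then show "\<phi> \<eta> = \<phi> \<xi>0" using const unfolding u0_def by blast
    qed
  qed
  have global: "\<forall>\<eta>. \<eta> \<le> \<xi>0 \<longrightarrow> \<phi> \<eta> = \<phi> \<xi>0" if z: "deriv \<phi> \<xi>0 = 0" for \<xi>0
  proof -
    define T where "T = {t. t \<le> \<xi>0 \<and> \<phi> t = \<phi> \<xi>0}"
    have xT: "\<xi>0 \<in> T" unfolding T_def by simp
    have nb: "\<not> bdd_below T"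
    proof
      assume bb: "bdd_below T"
      define s where "s = Inf T"
      have sle: "s \<le> t" if "t \<in> T" for t unfolding s_def by (rule cInf_lower[OF that bb])
      have sx: "s \<le> \<xi>0" using sle xT .
      have ps: "\<phi> s = \<phi> \<xi>0"
      proof (rule ccontr)
        assume ne: "\<phi> s \<noteq> \<phi> \<xi>0"
        have lt: "\<phi> s < \<phi> \<xi>0" using ne pmono[OF sx] by simp
        have "isCont \<phi> s" using D DERIV_isCont by blast
        then have "\<forall>r>0. \<exists>q>0. \<forall>y. y \<noteq> s \<and> norm (y - s) < q \<longrightarrow> norm (\<phi> y - \<phi> s) < r"
          by (simp only: isCont_def LIM_eq)
        then obtain q where q: "q > 0" and qq: "\<forall>y. y \<noteq> s \<and> norm (y - s) < q \<longrightarrow> norm (\<phi> y - \<phi> s) < \<phi> \<xi>0 - \<phi> s"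
          using lt by (metis diff_gt_0_iff_gt)
        have "Inf T < s + q" using q unfolding s_def by simp
        then obtain t where t: "t \<in> T" "t < s + q" using cInf_less_iff[of T "s + q"] xT bb by blast
        have "s \<le> t" using sle t by simp
        moreover have "t \<noteq> s" using t ne unfolding T_def by auto
        ultimately have "norm (\<phi> t - \<phi> s) < \<phi> \<xi>0 - \<phi> s" using qq t by auto
        then show False using t unfolding T_def by auto
      qed
      have onI: "\<phi> t = \<phi> \<xi>0" if "s \<le> t" "t \<le> \<xi>0" for t
        using pmono[OF that(1)] pmono[OF that(2)] ps by simp
      have zs: "deriv \<phi> s = 0"
      proof (cases "s = \<xi>0")
        case True then show ?thesis using z by simp
      next
        case False
        then have slt: "s < \<xi>0" using sx by simp
        show ?thesis
        proof (rule ccontr)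
          assume "deriv \<phi> s \<noteq> 0"
          then have "deriv \<phi> s > 0" using mono[of s] by simp
          from DERIV_pos_inc_right[OF D[of s] this] obtain dd where dd: "dd > 0"
            and inc: "\<forall>h>0. h < dd \<longrightarrow> \<phi> s < \<phi> (s + h)" by blast
          obtain m where m: "m > 0" "m \<le> dd" "m \<le> \<xi>0 - s" using dd slt
            by (intro that[of "min dd (\<xi>0 - s)"]) auto
          define hh where "hh = m / 2"
          have "hh > 0" "hh < dd" "s + hh \<le> \<xi>0" using m unfolding hh_def by linarith+
          then have "\<phi> s < \<phi> (s + hh)" "\<phi> (s + hh) = \<phi> \<xi>0" using inc onI[of "s + hh"] by auto
          then show False using ps by simp
        qed
      qed
      obtain e where e: "e > 0" and ee: "\<forall>\<eta>. s - e \<le> \<eta> \<and> \<eta> \<le> s \<longrightarrow> \<phi> \<eta> = \<phi> s"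
        using local[OF zs] by blast
      have "s - e \<in> T" using ee e ps sx unfolding T_def by auto
      then have "s \<le> s - e" by (rule sle)
      then show False using e by simp
    qed
    show ?thesis
    proof (intro allI impI)
      fix \<eta> assume "\<eta> \<le> \<xi>0"
      from nb obtain t where t: "t \<in> T" "t < \<eta>" unfolding bdd_below_def by (meson not_le_imp_less)
      then have "\<phi> \<xi>0 \<le> \<phi> \<eta>" using pmono[of t \<eta>] unfolding T_def by auto
      then show "\<phi> \<eta> = \<phi> \<xi>0" using pmono[OF \<open>\<eta> \<le> \<xi>0\<close>] by simp
    qed
  qed
  show ?thesis
  proof (rule ccontr)
    assume "\<not> (\<forall>\<xi>. deriv \<phi> \<xi> > 0)"
    then obtain \<xi>0 where "\<not> deriv \<phi> \<xi>0 > 0" by blast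
    then have z: "deriv \<phi> \<xi>0 = 0" using mono[of \<xi>0] by linarith
    have u0: "\<phi> \<xi>0 = 0"
    proof -
      have "eventually (\<lambda>x. \<phi> x = \<phi> \<xi>0) at_bot"
        unfolding eventually_at_bot_linorder using global[OF z] by blast
      then have "(\<phi> \<longlongrightarrow> \<phi> \<xi>0) at_bot" by (rule tendsto_eventually)
      then show ?thesis using lim0 tendsto_unique[OF trivial_limit_at_bot_linorder] by blast
    qed
    have ind: "\<forall>\<eta>. \<eta> < \<xi>0 + real n \<longrightarrow> \<phi> \<eta> = 0" for n
    proof (induction n)
      case 0
      then show ?case using global[OF z] u0 by auto
    next
      case (Suc n)
      show ?case
      proof (intro allI impI)
        fix \<eta> assume eta: "\<eta> < \<xi>0 + real (Suc n)"
        define x where "x = \<eta> - 1"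
        have xl: "x < \<xi>0 + real n" using eta unfolding x_def by simp
        have px: "\<phi> x = 0" "\<phi> (x - 1) = 0" using Suc xl by auto
        have "deriv \<phi> x = 0"
        proof (rule DERIV_local_const[OF D[of x]])
          show "0 < \<xi>0 + real n - x" using xl by simp
          show "\<forall>y. \<bar>x - y\<bar> < \<xi>0 + real n - x \<longrightarrow> \<phi> x = \<phi> y"
            using Suc px by (auto simp: abs_if split: if_splits)
        qed
        then have "0 = d * (\<phi> \<eta> - 2 * \<phi> x + \<phi> (x - 1)) + f (\<phi> x) (w x)"
          using E[of x] unfolding x_def by simp
        then have eq: "0 = d * \<phi> \<eta> + f 0 (w x)" using px by simp
        have "f 0 0 \<le> f 0 (w x)" using fmono[of 0 0 "w x"] wb[of x] K by auto
        then have "d * \<phi> \<eta> \<le> 0" using eq F1_zero by linarith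
        then have "\<phi> \<eta> \<le> 0" using d by (simp add: mult_le_0_iff)
        then show "\<phi> \<eta> = 0" using bnd[of \<eta>] by simp
      qed
    qed
    have "\<phi> x = 0" for x
    proof -
      obtain n :: nat where "x - \<xi>0 < real n" using reals_Archimedean2 by blast
      then show ?thesis using ind[of n] by auto
    qed
    then have "\<phi> = (\<lambda>_. 0)" by auto
    then have "(\<phi> \<longlongrightarrow> 0) at_top" by simp
    then have "K = 0" using limK tendsto_unique[OF trivial_limit_at_top_linorder] by blast
    then show False using K by simp
  qed
qed

end
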